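(* If $X$ is a crowded submaximal (Tychonoff) space, then $X$ has the property $(\kappa)$.
   Context: A space is crowded if it is non-empty and has no isolated points; it is submaximal if every dense subset is open. A family $\{A_\alpha\}$ of subsets of $X$ is strongly point-finite if there are open sets $U_\alpha\supseteq A_\alpha$ such that each point of $X$ lies in only finitely many $U_\alpha$. $X$ has property $(\kappa)$ if every pairwise disjoint sequence of finite subsets of $X$ has a strongly point-finite subsequence. All spaces are assumed Tychonoff. *)

theory Defs
  imports "HOL-Analysis.Analysis"
begin

definition tychonoff_space :: "'a topology \<Rightarrow> bool" where
  "tychonoff_space X \<longleftrightarrow> t1_space X \<and> completely_regular_space X"

definition crowded :: "'a topology \<Rightarrow> bool" where
  "crowded X \<longleftrightarrow> topspace X \<noteq> {} \<and> (\<forall>x \<in> topspace X. \<not> openin X {x})"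

definition submaximal :: "'a topology \<Rightarrow> bool" where
  "submaximal X \<longleftrightarrow>
     (\<forall>D. D \<subseteq> topspace X \<and> X closure_of D = topspace X \<longrightarrow> openin X D)"

definition strongly_point_finite :: "'a topology \<Rightarrow> (nat \<Rightarrow> 'a set) \<Rightarrow> bool" where
  "strongly_point_finite X A \<longleftrightarrow>
     (\<exists>U. (\<forall>n. openin X (U n) \<and> A n \<subseteq> U n) \<and>
          (\<forall>x \<in> topspace X. finite {n. x \<in> U n}))"

definition property_kappa :: "'a topology \<Rightarrow> bool" where
  "property_kappa X \<longleftrightarrow>
     (\<forall>F :: nat \<Rightarrow> 'a set.
        (\<forall>n. finite (F n) \<and> F n \<subseteq> topspace X) \<and>
        (\<forall>m n. m \<noteq> n \<longrightarrow> F m \<inter> F n = {}) \<longrightarrow>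
        (\<exists>r. strict_mono r \<and> strongly_point_finite X (F \<circ> r)))"

end

theory Submission
  imports Defs "HOL-Library.Countable"
begin


lemma unc_fun: "uncountable (UNIV :: (nat \<Rightarrow> bool) set)"
proof
  assume "countable (UNIV :: (nat \<Rightarrow> bool) set)"
  then obtain g :: "nat \<Rightarrow> (nat \<Rightarrow> bool)" where g: "range g = UNIV"
    using uncountable_def by blast
  obtain n where "g n = (\<lambda>k. \<not> g k k)" using g by (metis UNIV_I imageE)
  then show False by (metis)
qed

lemma almost_disj:
  fixes f g :: "nat \<Rightarrow> bool"
  defines "S \<equiv> \<lambda>h. range (\<lambda>n. to_nat (map h [0..<n]))"
  shows "infinite (S f)" and "f \<noteq> g \<Longrightarrow> finite (S f \<inter> S g)"
proof -
  have "inj (\<lambda>n. to_nat (map f [0..<n]))"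
    by (rule injI) (metis inj_to_nat injD length_map length_upt minus_nat.diff_0)
  then show "infinite (S f)" unfolding S_def using range_inj_infinite by blast
next
  assume "f \<noteq> g"
  then obtain k where k: "f k \<noteq> g k" by auto
  have "S f \<inter> S g \<subseteq> (\<lambda>n. to_nat (map f [0..<n])) ` {..k}"
  proof
    fix x assume "x \<in> S f \<inter> S g"
    then obtain n where x1: "x = to_nat (map f [0..<n])" unfolding S_def by auto
    obtain m where x2: "x = to_nat (map g [0..<m])" using \<open>x \<in> S f \<inter> S g\<close> unfolding S_def by auto
    note x = x1 x2
    then have e: "map f [0..<n] = map g [0..<m]" by (metis inj_to_nat injD)
    then have "n = m" by (metis length_map length_upt minus_nat.diff_0)
    have "n \<le> k"
    proof (rule ccontr)
      assume "\<not> n \<le> k"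
      then have "map f [0..<n] ! k = f k" "map g [0..<m] ! k = g k" using \<open>n = m\<close> by auto
      then show False using e k by simp
    qed
    then show "x \<in> (\<lambda>n. to_nat (map f [0..<n])) ` {..k}" using x by auto
  qed
  then show "finite (S f \<inter> S g)" by (meson finite_atMost finite_imageI finite_subset)
qed


lemma sub_closed:
  assumes "submaximal X" "A \<subseteq> topspace X" "X interior_of A = {}"
  shows "closedin X A"
proof -
  have "X closure_of (topspace X - A) = topspace X"
    using assms(3) by (simp add: closure_of_complement)
  then have "openin X (topspace X - A)" using assms(1) unfolding submaximal_def by blast
  then show ?thesis using assms(2) by (simp add: closedin_def)
qed

lemma fin_open_empty:
  assumes "t1_space X" "crowded X" "openin X V" "finite V"
  shows "V = {}"
proof (rule ccontr)
  assume "V \<noteq> {}"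
  then obtain x where x: "x \<in> V" by auto
  have V: "V \<subseteq> topspace X" using assms(3) openin_subset by blast
  have "closedin X (V - {x})" using assms(1,4) V t1_space_closedin_finite by (metis Diff_subset finite_Diff order_trans)
  then have "openin X (V \<inter> (topspace X - (V - {x})))" using assms(3) by blast
  moreover have "V \<inter> (topspace X - (V - {x})) = {x}" using x V by auto
  ultimately show False using assms(2) x V unfolding crowded_def by auto
qed

lemma exists_S:
  fixes F :: "nat \<Rightarrow> 'a set"
  assumes t1: "t1_space X" and cr: "crowded X"
    and F: "\<And>n. finite (F n)" and dj: "\<And>m n. m \<noteq> n \<Longrightarrow> F m \<inter> F n = {}"
  shows "\<exists>S. infinite S \<and> X interior_of (\<Union>n\<in>S. F n) = {}"
proof (rule ccontr)
  assume H: "\<not> ?thesis"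
  define SS where "SS \<equiv> \<lambda>h::nat\<Rightarrow>bool. range (\<lambda>n. to_nat (map h [0..<n]))"
  define W where "W \<equiv> \<lambda>h. X interior_of (\<Union>n\<in>SS h. F n)"
  have Wne: "W h \<noteq> {}" for h
  proof -
    have "infinite (SS h)" unfolding SS_def by (rule almost_disj(1))
    moreover from H have "\<forall>S. infinite S \<longrightarrow> X interior_of (\<Union>n\<in>S. F n) \<noteq> {}" by blast
    ultimately show ?thesis unfolding W_def by simp
  qed
  define p where "p \<equiv> \<lambda>h. SOME x. x \<in> W h"
  have pW: "p h \<in> W h" for h unfolding p_def using Wne[of h] by (simp add: some_in_eq)
  have ip: "inj p"
  proof (rule injI, rule ccontr)
    fix h g assume e: "p h = p g" and ne: "h \<noteq> g"
    have o: "openin X (W h \<inter> W g)" unfolding W_def by (intro openin_Int openin_interior_of)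
    have s1: "W h \<subseteq> (\<Union>n\<in>SS h. F n)" unfolding W_def by (rule interior_of_subset)
    have s2: "W g \<subseteq> (\<Union>n\<in>SS g. F n)" unfolding W_def by (rule interior_of_subset)
    have "W h \<inter> W g \<subseteq> (\<Union>n\<in>SS h. F n) \<inter> (\<Union>n\<in>SS g. F n)"
      using Int_mono[OF s1 s2] .
    also have "\<dots> \<subseteq> (\<Union>n\<in>SS h \<inter> SS g. F n)"
    proof
      fix x assume "x \<in> (\<Union>n\<in>SS h. F n) \<inter> (\<Union>n\<in>SS g. F n)"
      then obtain a b where ab: "a \<in> SS h" "x \<in> F a" "b \<in> SS g" "x \<in> F b" by blast
      have "a = b"
      proof (rule ccontr)
        assume "a \<noteq> b"
        then have "F a \<inter> F b = {}" by (rule dj)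
        with ab show False by blast
      qed
      then show "x \<in> (\<Union>n\<in>SS h \<inter> SS g. F n)" using ab by blast
    qed
    finally have sub: "W h \<inter> W g \<subseteq> (\<Union>n\<in>SS h \<inter> SS g. F n)" .
    have "finite (SS h \<inter> SS g)" unfolding SS_def by (rule almost_disj(2)[OF ne])
    then have "finite (\<Union>n\<in>SS h \<inter> SS g. F n)" using F by (intro finite_UN_I)
    then have "finite (W h \<inter> W g)" using sub finite_subset by blast
    then have "W h \<inter> W g = {}" by (rule fin_open_empty[OF t1 cr o])
    then show False using pW[of h] pW[of g] e by (metis IntI empty_iff)
  qed
  have rp: "range p \<subseteq> (\<Union>n. F n)"
  proof
    fix x assume "x \<in> range p"
    then obtain h where "x = p h" by auto
    moreover have "W h \<subseteq> (\<Union>n\<in>SS h. F n)" unfolding W_def by (rule interior_of_subset)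
    ultimately show "x \<in> (\<Union>n. F n)" using pW[of h] by blast
  qed
  have cF: "countable (\<Union>n. F n)" by (rule countable_UN) (simp_all add: countable_finite F)
  have "countable (range p)" using countable_subset[OF rp cF] .
  then have "countable (UNIV :: (nat \<Rightarrow> bool) set)"
    using countable_image_inj_on ip by blast
  then show False using unc_fun by blast
qed



theorem mainTheorem4:
  fixes X :: "'a topology"
  assumes "tychonoff_space X" and "crowded X" and "submaximal X"
  shows "property_kappa X"
  unfolding property_kappa_def
proof (intro allI impI)
  fix F :: "nat \<Rightarrow> 'a set"
  assume A: "(\<forall>n. finite (F n) \<and> F n \<subseteq> topspace X) \<and> (\<forall>m n. m \<noteq> n \<longrightarrow> F m \<inter> F n = {})"
  have t1: "t1_space X" using assms(1) unfolding tychonoff_space_def by (rule conjunct1)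
  have "completely_regular_space X" using assms(1) unfolding tychonoff_space_def by (rule conjunct2)
  then have reg: "regular_space X" by (rule completely_regular_imp_regular_space)
  have Ff: "\<And>n. finite (F n)" using A by blast
  have Ft: "\<And>n. F n \<subseteq> topspace X" using A by blast
  have dj: "\<And>m n. m \<noteq> n \<Longrightarrow> F m \<inter> F n = {}" using A by blast
  have "\<exists>S. infinite S \<and> X interior_of (\<Union>n\<in>S. F n) = {}" by (rule exists_S[OF t1 assms(2) Ff dj])
  then obtain S where SS: "infinite S \<and> X interior_of (\<Union>n\<in>S. F n) = {}" ..
  then have S: "infinite S" and int: "X interior_of (\<Union>n\<in>S. F n) = {}" by auto
  define D where "D = (\<Union>n\<in>S. F n)"
  define r where "r = enumerate S"
  have sm: "strict_mono r" unfolding r_def using S by (simp add: strict_mono_enumerate)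
  have rS: "r k \<in> S" for k unfolding r_def using S by (simp add: enumerate_in_set)
  define G where "G = F \<circ> r"
  have GD: "G k \<subseteq> D" for k unfolding G_def D_def using rS by auto
  have Gdj: "j \<noteq> k \<Longrightarrow> G k \<subseteq> D - G j" for j k
    using GD[of k] dj[of "r k" "r j"] strict_mono_eq[OF sm, of k j] unfolding G_def by auto
  have Dt: "D \<subseteq> topspace X" unfolding D_def using Ft by auto
  have "\<exists>N. openin X N \<and> G k \<subseteq> N \<and> X closure_of N \<inter> (D - G k) = {}" for k
  proof -
    have sub: "D - G k \<subseteq> topspace X" using Dt by blast
    have "X interior_of (D - G k) \<subseteq> X interior_of D" by (rule interior_of_mono) blast
    then have ie: "X interior_of (D - G k) = {}" using int[folded D_def] by blast
    have cl: "closedin X (D - G k)" by (rule sub_closed[OF assms(3) sub ie])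
    have co: "compactin X (G k)" unfolding G_def comp_def by (rule finite_imp_compactin[OF Ft Ff])
    have dis: "disjnt (G k) (D - G k)" unfolding disjnt_def by blast
    obtain U V where UV: "openin X U" "openin X V" "G k \<subseteq> U" "D - G k \<subseteq> V" "disjnt U V"
      using regular_space_compact_closed_separation[OF reg co cl dis] by blast
    have c1: "closedin X (topspace X - V)" by (rule closedin_diff[OF closedin_topspace UV(2)])
    have "U \<subseteq> topspace X" by (rule openin_subset[OF UV(1)])
    then have c2: "U \<subseteq> topspace X - V" using UV(5) unfolding disjnt_def by blast
    have "X closure_of U \<subseteq> topspace X - V" by (rule closure_of_minimal[OF c2 c1])
    then have "X closure_of U \<inter> (D - G k) = {}" using UV(4) by blast
    then show ?thesis using UV(1,3) by blast
  qed
  then have "\<forall>k. \<exists>N. openin X N \<and> G k \<subseteq> N \<and> X closure_of N \<inter> (D - G k) = {}" by blast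
  then obtain N where NN: "\<forall>k. openin X (N k) \<and> G k \<subseteq> N k \<and> X closure_of (N k) \<inter> (D - G k) = {}"
    using choice[of "\<lambda>k N. openin X N \<and> G k \<subseteq> N \<and> X closure_of N \<inter> (D - G k) = {}"] by blast
  then have N: "\<And>k. openin X (N k)" "\<And>k. G k \<subseteq> N k"
    "\<And>k. X closure_of (N k) \<inter> (D - G k) = {}" by auto
  define U where "U = (\<lambda>k. N k - (\<Union>j<k. X closure_of N j))"
  have Uo: "openin X (U k)" for k
  proof -
    have "closedin X (\<Union>j<k. X closure_of N j)" by (rule closedin_Union) auto
    then show ?thesis unfolding U_def by (rule openin_diff[OF N(1)])
  qed
  have GU: "G k \<subseteq> U k" for k
  proof -
    have "G k \<inter> X closure_of N j = {}" if "j < k" for j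
      using N(3)[of j] Gdj[of j k] that by auto
    then show ?thesis unfolding U_def using N(2)[of k] by auto
  qed
  have Udj: "U j \<inter> U k = {}" if jk: "j < k" for j k
  proof -
    have "N j \<subseteq> X closure_of N j" using closure_of_subset openin_subset N(1) by metis
    then show ?thesis unfolding U_def using jk by auto
  qed
  have "finite {n. x \<in> U n}" for x
  proof (cases "\<exists>n. x \<in> U n")
    case True
    then obtain n where n: "x \<in> U n" by auto
    have "{n. x \<in> U n} \<subseteq> {n}"
    proof
      fix m assume "m \<in> {n. x \<in> U n}"
      then have "x \<in> U m" by simp
      then show "m \<in> {n}" using n Udj[of m n] Udj[of n m] by (cases "m < n"; cases "n < m") auto
    qed
    then show ?thesis using finite_subset by blast
  next
    case False then show ?thesis by simp
  qed
  then have "strongly_point_finite X (F \<circ> r)"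
    unfolding strongly_point_finite_def using Uo GU G_def by blast
  then show "\<exists>r. strict_mono r \<and> strongly_point_finite X (F \<circ> r)" using sm by blast
qed

end
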